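(* Let $(X,\mathscr{R})$ be a reaction network with stoichiometric matrix $S$, and let $A\in\mathbb{N}_0^{\mathcal{A}\times X}$ be an sf-instance. Consider the statements, for $x,y\in X$: (i) $x$ and $y$ are obligatory isomers; (ii) $A_{ax}=A_{ay}$ for all $a\in\mathcal{A}$. If $\operatorname{im}A^\top=\ker S^\top$, then (i) and (ii) are equivalent. If $\operatorname{im}A^\top\subseteq\ker S^\top$, then (i) implies (ii).
   Context: A reaction network (RN) $(X,\mathscr{R})$ consists of a finite non-empty set $X$ of species and a finite non-empty set $\mathscr{R}$ of reactions. Each reaction $r$ is given by stoichiometric coefficients $s^-_{xr},s^+_{xr}\in\mathbb{N}_0$. The stoichiometric matrix $S\in\mathbb{Z}^{X\times\mathscr{R}}$ has entries $S_{xr}=s^+_{xr}-s^-_{xr}$. The paper assumes throughout that RNs are closed: every reaction $r$ has $x,y$ with $S_{xr}<0<S_{yr}$. An sf-instance is a matrix $A\in\mathbb{N}_0^{\mathcal{A}\times X}$, for some non-empty finite set $\mathcal{A}$, with every column nonzero and $AS=0$. Distinct $x,y\in X$ are obligatory isomers if there is $v\in\mathbb{Z}^{\mathscr{R}}$ with: - $-[Sv]_x=[Sv]_y=k$ for some positive integer $k$; - $[Sv]_z=0$ for all $z\in X\setminus\{x,y\}$. *)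

theory Defs
  imports Complex_Main
begin

text \<open>A reaction network with species type 's and reaction type 'r (both finite,
  hence non-empty), given by stoichiometric coefficients sm (= s^-) and sp (= s^+).\<close>

definition stoich :: "('s \<Rightarrow> 'r \<Rightarrow> nat) \<Rightarrow> ('s \<Rightarrow> 'r \<Rightarrow> nat) \<Rightarrow> 's \<Rightarrow> 'r \<Rightarrow> int" where
  "stoich sm sp x r = int (sp x r) - int (sm x r)"

definition closed_RN :: "('s \<Rightarrow> 'r \<Rightarrow> nat) \<Rightarrow> ('s \<Rightarrow> 'r \<Rightarrow> nat) \<Rightarrow> bool" where
  "closed_RN sm sp \<longleftrightarrow> (\<forall>r. \<exists>x y. stoich sm sp x r < 0 \<and> 0 < stoich sm sp y r)"

definition Smult :: "('s \<Rightarrow> 'r::finite \<Rightarrow> int) \<Rightarrow> ('r \<Rightarrow> int) \<Rightarrow> 's \<Rightarrow> int" where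
  "Smult S v x = (\<Sum>r\<in>UNIV. S x r * v r)"

definition sf_instance :: "('s::finite \<Rightarrow> 'r \<Rightarrow> int) \<Rightarrow> ('a \<Rightarrow> 's \<Rightarrow> nat) \<Rightarrow> bool" where
  "sf_instance S A \<longleftrightarrow> (\<forall>x. \<exists>a. A a x \<noteq> 0) \<and>
     (\<forall>a r. (\<Sum>x\<in>UNIV. int (A a x) * S x r) = 0)"

definition obligatory_isomers :: "('s \<Rightarrow> 'r::finite \<Rightarrow> int) \<Rightarrow> 's \<Rightarrow> 's \<Rightarrow> bool" where
  "obligatory_isomers S x y \<longleftrightarrow> x \<noteq> y \<and>
     (\<exists>v k. k > 0 \<and> - Smult S v x = k \<and> Smult S v y = k \<and>
        (\<forall>z. z \<noteq> x \<and> z \<noteq> y \<longrightarrow> Smult S v z = 0))"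

definition im_AT :: "('a::finite \<Rightarrow> 's \<Rightarrow> nat) \<Rightarrow> ('s \<Rightarrow> real) set" where
  "im_AT A = {w. \<exists>l::'a \<Rightarrow> real. \<forall>x. w x = (\<Sum>a\<in>UNIV. real (A a x) * l a)}"

definition ker_ST :: "('s::finite \<Rightarrow> 'r \<Rightarrow> int) \<Rightarrow> ('s \<Rightarrow> real) set" where
  "ker_ST S = {w. \<forall>r. (\<Sum>x\<in>UNIV. real_of_int (S x r) * w x) = 0}"

end

theory Submission imports Defs "HOL-Library.Function_Algebras" begin

lemma sum_fun_apply: "(\<Sum>x\<in>A. f x) z = (\<Sum>x\<in>A. (f x z :: 'b::comm_monoid_add))"
  by (induction A rule: infinite_finite_induct) (simp_all add: plus_fun_def zero_fun_def)

definition matT :: "('s \<Rightarrow> 'r::finite \<Rightarrow> rat) \<Rightarrow> ('r \<Rightarrow> rat) \<Rightarrow> 's \<Rightarrow> rat" where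
  "matT S v = (\<lambda>z. \<Sum>r\<in>UNIV. S z r * v r)"

lemma matT_0: "matT S (\<lambda>_. 0) = 0"
  by (rule ext) (simp add: matT_def)

lemma matT_add: "matT S u + matT S v = matT S (\<lambda>r. u r + v r)"
proof (rule ext)
  fix z
  have "(\<Sum>r\<in>UNIV. S z r * u r) + (\<Sum>r\<in>UNIV. S z r * v r) = (\<Sum>r\<in>UNIV. S z r * (u r + v r))"
    unfolding sum.distrib[symmetric] by (rule sum.cong) (simp_all add: distrib_left)
  then show "(matT S u + matT S v) z = matT S (\<lambda>r. u r + v r) z"
    by (simp only: matT_def plus_fun_def)
qed

lemma matT_scale: "(\<lambda>z. c * matT S u z) = matT S (\<lambda>r. c * u r)"
proof (rule ext)
  fix z
  have "c * (\<Sum>r\<in>UNIV. S z r * u r) = (\<Sum>r\<in>UNIV. S z r * (c * u r))"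
    unfolding sum_distrib_left by (rule sum.cong) (simp_all add: ac_simps)
  then show "c * matT S u z = matT S (\<lambda>r. c * u r) z"
    by (simp only: matT_def)
qed

lemma fredholm_rat:
  fixes S :: "'s::finite \<Rightarrow> 'r::finite \<Rightarrow> rat" and b :: "'s \<Rightarrow> rat"
  assumes "\<not> (\<exists>v. \<forall>z. (\<Sum>r\<in>UNIV. S z r * v r) = b z)"
  shows "\<exists>w. (\<forall>r. (\<Sum>x\<in>UNIV. w x * S x r) = 0) \<and> (\<Sum>x\<in>UNIV. w x * b x) \<noteq> 0"
proof -
  define sc where "sc = (\<lambda>(c::rat) (f::'s\<Rightarrow>rat). (\<lambda>x. c * f x))"
  interpret V: vector_space sc
    by unfold_locales (auto simp: sc_def fun_eq_iff algebra_simps)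
  interpret Q: vector_space "(*) :: rat \<Rightarrow> rat \<Rightarrow> rat"
    by unfold_locales (auto simp: algebra_simps)
  interpret P: vector_space_pair sc "(*) :: rat \<Rightarrow> rat \<Rightarrow> rat" by unfold_locales
  define T where "T = matT S"
  define U where "U = range T"
  have subU: "V.subspace U"
    unfolding V.subspace_def U_def
  proof (intro conjI ballI allI)
    show "0 \<in> range T" unfolding T_def using matT_0[of S] rangeI[of "matT S" "\<lambda>_. 0"] by simp
  next
    fix x y assume "x \<in> range T" "y \<in> range T"
    then obtain u v where uv: "x = T u" "y = T v" by blast
    show "x + y \<in> range T" unfolding uv T_def matT_add by (rule rangeI)
  next
    fix c x assume "x \<in> range T"
    then obtain u where u: "x = T u" by blast
    show "sc c x \<in> range T" unfolding u T_def sc_def matT_scale by (rule rangeI)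
  qed
  obtain B where B: "B \<subseteq> U" "V.independent B" "U \<subseteq> V.span B"
    using V.maximal_independent_subset by blast
  have bnot: "b \<notin> V.span B"
  proof
    assume "b \<in> V.span B"
    then have "b \<in> U" using V.span_minimal[OF B(1) subU] by blast
    then obtain v where "b = matT S v" unfolding U_def T_def by blast
    then have "\<forall>z. (\<Sum>r\<in>UNIV. S z r * v r) = b z" by (simp add: matT_def)
    then show False using assms by blast
  qed
  have ind: "V.independent (insert b B)" using V.independent_insertI[OF bnot B(2)] .
  define f where "f = (\<lambda>u. if u = b then (1::rat) else 0)"
  define g where "g = P.construct (insert b B) f"
  have lg: "Vector_Spaces.linear sc (*) g" unfolding g_def by (rule P.linear_construct[OF ind])
  have gB: "\<And>u. u \<in> insert b B \<Longrightarrow> g u = f u" unfolding g_def by (rule P.construct_basis[OF ind])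
  have bB: "b \<notin> B" using bnot V.span_base by blast
  have g0: "g u = 0" if "u \<in> V.span B" for u
  proof -
    have "\<forall>u\<in>B. g u = 0" using gB bB by (auto simp: f_def)
    then show ?thesis using that P.linear_eq_0_on_span[OF lg] by blast
  qed
  define w where "w = (\<lambda>x. g (\<lambda>z. if z = x then 1 else 0))"
  have gexp: "g u = (\<Sum>x\<in>UNIV. u x * w x)" for u
  proof -
    have "u = (\<Sum>x\<in>UNIV. sc (u x) (\<lambda>z. if z = x then 1 else 0))"
      proof (rule ext)
      fix z
      have "(\<Sum>x\<in>UNIV. sc (u x) (\<lambda>z. if z = x then 1 else 0)) z = (\<Sum>x\<in>UNIV. u x * (if z = x then 1 else 0))"
        unfolding sum_fun_apply sc_def by simp
      also have "\<dots> = u z" by (simp add: if_distrib cong: if_cong)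
      finally show "u z = (\<Sum>x\<in>UNIV. sc (u x) (\<lambda>z. if z = x then 1 else 0)) z" by simp
    qed
    then have "g u = g (\<Sum>x\<in>UNIV. sc (u x) (\<lambda>z. if z = x then 1 else 0))" by simp
    also have "\<dots> = (\<Sum>x\<in>UNIV. u x * w x)" 
      unfolding w_def P.linear_sum[OF lg] P.linear_scale[OF lg] by simp
    finally show ?thesis .
  qed
  show ?thesis
  proof (intro exI conjI allI)
    fix r
    have "(\<lambda>x. S x r) = matT S (\<lambda>q. if q = r then 1 else 0)"
      unfolding matT_def by (rule ext) (simp add: if_distrib cong: if_cong)
    then have "(\<lambda>x. S x r) \<in> U" unfolding U_def T_def by (metis rangeI)
    then have "g (\<lambda>x. S x r) = 0" using B(3) g0 by blast
    then show "(\<Sum>x\<in>UNIV. w x * S x r) = 0" using gexp[of "\<lambda>x. S x r"] by (simp add: mult.commute)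
  next
    have "g b = 1" using gB f_def by simp
    then show "(\<Sum>x\<in>UNIV. w x * b x) \<noteq> 0" using gexp[of b] by (simp add: mult.commute)
  qed
qed

lemma oi_imp:
  fixes S :: "'s::finite \<Rightarrow> 'r::finite \<Rightarrow> int" and A :: "'a \<Rightarrow> 's \<Rightarrow> nat"
  assumes sf: "sf_instance S A" and oi: "obligatory_isomers S x y"
  shows "A a x = A a y"
proof -
  obtain v k where k: "k > 0" "- Smult S v x = k" "Smult S v y = k"
     "\<forall>z. z \<noteq> x \<and> z \<noteq> y \<longrightarrow> Smult S v z = 0" and xy: "x \<noteq> y"
    using oi unfolding obligatory_isomers_def by blast
  have sv: "Smult S v = (\<lambda>z. k * ((if z = y then 1 else 0) - (if z = x then 1 else 0)))"
    using k xy by (auto simp: fun_eq_iff)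
  have "(\<Sum>z\<in>UNIV. int (A a z) * Smult S v z) = (\<Sum>r\<in>UNIV. (\<Sum>z\<in>UNIV. int (A a z) * S z r) * v r)"
    unfolding Smult_def sum_distrib_left sum_distrib_right mult.assoc
    by (rule sum.swap)
  also have "\<dots> = 0" using sf unfolding sf_instance_def by simp
  finally have "(\<Sum>z\<in>UNIV. int (A a z) * Smult S v z) = 0" .
  moreover have "(\<Sum>z\<in>UNIV. int (A a z) * Smult S v z) = (\<Sum>z\<in>UNIV. (if z = y then k * int (A a y) else 0) - (if z = x then k * int (A a x) else 0))"
    by (rule sum.cong) (use xy in \<open>auto simp: sv\<close>)
  ultimately have "(\<Sum>z\<in>UNIV. (if z = y then k * int (A a y) else 0) - (if z = x then k * int (A a x) else 0)) = 0"
    by simp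
  then have "k * int (A a y) - k * int (A a x) = 0" by (simp add: sum_subtractf)
  then have "k * (int (A a y) - int (A a x)) = 0" by (simp add: right_diff_distrib)
  then show ?thesis using k(1) by simp
qed

lemma imp_oi:
  fixes S :: "'s::finite \<Rightarrow> 'r::finite \<Rightarrow> int" and A :: "'a::finite \<Rightarrow> 's \<Rightarrow> nat"
  assumes eq: "im_AT A = ker_ST S" and xy: "x \<noteq> y" and Aeq: "\<forall>a. A a x = A a y"
  shows "obligatory_isomers S x y"
proof -
  define b :: "'s \<Rightarrow> rat" where "b = (\<lambda>z. (if z = y then 1 else 0) - (if z = x then 1 else 0))"
  define Sq where "Sq = (\<lambda>z r. rat_of_int (S z r))"
  have "\<exists>v. \<forall>z. (\<Sum>r\<in>UNIV. Sq z r * v r) = b z"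
  proof (rule ccontr)
    assume "\<not> ?thesis"
    from fredholm_rat[OF this] obtain w where
      w: "\<forall>r. (\<Sum>x\<in>UNIV. w x * Sq x r) = 0" "(\<Sum>x\<in>UNIV. w x * b x) \<noteq> 0" by blast
    define w' where "w' = (\<lambda>z. real_of_rat (w z))"
    have "w' \<in> ker_ST S"
      unfolding ker_ST_def
    proof (intro CollectI allI)
      fix r
      have "(\<Sum>x\<in>UNIV. real_of_int (S x r) * w' x) = real_of_rat (\<Sum>x\<in>UNIV. w x * Sq x r)"
        by (simp add: w'_def Sq_def of_rat_sum of_rat_mult mult.commute)
      then show "(\<Sum>x\<in>UNIV. real_of_int (S x r) * w' x) = 0" using w(1) by simp
    qed
    then have "w' \<in> im_AT A" using eq by simp
    then obtain l :: "'a \<Rightarrow> real" where l: "\<forall>z. w' z = (\<Sum>a\<in>UNIV. real (A a z) * l a)"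
      unfolding im_AT_def by blast
    have "w' x = w' y" using l Aeq by simp
    then have "w x = w y" unfolding w'_def by simp
    moreover have "(\<Sum>x\<in>UNIV. w x * b x) = w y - w x"
    proof -
      have "(\<Sum>z\<in>UNIV. w z * b z) = (\<Sum>z\<in>UNIV. (if z = y then w z else 0) - (if z = x then w z else 0))"
        by (rule sum.cong) (auto simp: b_def)
      also have "\<dots> = w y - w x" by (simp add: sum_subtractf)
      finally show ?thesis .
    qed
    ultimately show False using w(2) by simp
  qed
  then obtain v where v: "\<And>z. (\<Sum>r\<in>UNIV. Sq z r * v r) = b z" by blast
  define d where "d = (\<Prod>r\<in>UNIV. snd (quotient_of (v r)))"
  have dpos: "d > 0" unfolding d_def
  proof (rule prod_pos)
    fix r
    show "0 < snd (quotient_of (v r))"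
      using quotient_of_denom_pos[of "v r" "fst (quotient_of (v r))" "snd (quotient_of (v r))"] by simp
  qed
  have "\<exists>n. rat_of_int n = rat_of_int d * v r" for r
  proof -
    obtain p q where pq: "quotient_of (v r) = (p, q)" by (cases "quotient_of (v r)")
    have "snd (quotient_of (v r)) dvd d" unfolding d_def by (rule dvd_prodI) auto
    then have "q dvd d" using pq by simp
    then obtain m where m: "d = q * m" by (auto elim: dvdE)
    have q0: "q > 0" using quotient_of_denom_pos[OF pq] .
    have "v r = of_int p / of_int q" using quotient_of_div[OF pq] .
    then have "rat_of_int d * v r = of_int (m * p)" using q0 unfolding m by (simp add: field_simps)
    then show ?thesis by (intro exI[of _ "m * p"]) simp
  qed
  then have "\<forall>r. \<exists>n. rat_of_int n = rat_of_int d * v r" by blast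
  from choice[OF this] obtain vi where vi: "\<And>r. rat_of_int (vi r) = rat_of_int d * v r" by blast
  have sm: "Smult S vi z = d * ((if z = y then 1 else 0) - (if z = x then 1 else 0))" for z
  proof -
    have "rat_of_int (Smult S vi z) = rat_of_int d * (\<Sum>r\<in>UNIV. Sq z r * v r)"
    proof -
      have "rat_of_int (Smult S vi z) = (\<Sum>r\<in>UNIV. Sq z r * rat_of_int (vi r))"
        unfolding Smult_def Sq_def by (simp only: of_int_sum of_int_mult)
      also have "\<dots> = (\<Sum>r\<in>UNIV. rat_of_int d * (Sq z r * v r))"
        by (rule sum.cong) (simp_all only: vi mult.left_commute)
      also have "\<dots> = rat_of_int d * (\<Sum>r\<in>UNIV. Sq z r * v r)"
        by (simp only: sum_distrib_left)
      finally show ?thesis .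
    qed
    also have "\<dots> = rat_of_int (d * ((if z = y then 1 else 0) - (if z = x then 1 else 0)))"
      by (simp add: v b_def)
    finally show ?thesis by (simp only: of_int_eq_iff)
  qed
  show ?thesis unfolding obligatory_isomers_def
    using xy dpos by (intro conjI exI[of _ vi] exI[of _ d]) (auto simp: sm)
qed

theorem theorem7:
  fixes sm sp :: "'s::finite \<Rightarrow> 'r::finite \<Rightarrow> nat"
    and A :: "'a::finite \<Rightarrow> 's \<Rightarrow> nat"
  assumes "closed_RN sm sp"
    and "sf_instance (stoich sm sp) A"
  shows "(im_AT A = ker_ST (stoich sm sp) \<longrightarrow>
            (\<forall>x y. x \<noteq> y \<longrightarrow>
               (obligatory_isomers (stoich sm sp) x y \<longleftrightarrow> (\<forall>a. A a x = A a y))))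
       \<and> (im_AT A \<subseteq> ker_ST (stoich sm sp) \<longrightarrow>
            (\<forall>x y. obligatory_isomers (stoich sm sp) x y \<longrightarrow> (\<forall>a. A a x = A a y)))"
  using oi_imp[OF assms(2)] imp_oi by blast

end
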